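(* Let $\mathscr H$ be a complex Hilbert space and let $\mathbf{T}=(T_1,\dots,T_d)\in\mathbb{B}(\mathscr H)^d$ be a normal $d$-tuple. Then $$\|\mathbf{T}^2\|=\|(T_1^*T_1,T_2^*T_2,\dots,T_d^*T_d)\|\le\|\mathbf{T}\|^2=\|\mathbf{T}^*\|^2\le\sqrt{d}\,\|\mathbf{T}^2\|.$$
   Context: $\mathbb{B}(\mathscr H)$ denotes the bounded linear operators on $\mathscr H$. A $d$-tuple $\mathbf{T}=(T_1,\dots,T_d)$ is normal if $T_iT_j=T_jT_i$ for all $i,j$ and each $T_i$ is a normal operator. The joint operator norm is $\|\mathbf{T}\|=\sup\{(\sum_{k=1}^d\|T_kx\|^2)^{1/2}: x\in\mathscr H,\|x\|=1\}$. Operations are componentwise: $\mathbf{T}^2=(T_1^2,\dots,T_d^2)$, $\mathbf{T}^*=(T_1^*,\dots,T_d^* )$. *)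

theory Defs
  imports "HOL-Analysis.Analysis"
begin

class chilbert = real_normed_vector + complete_space +
  fixes scaleC :: "complex \<Rightarrow> 'a \<Rightarrow> 'a"
    and cinner :: "'a \<Rightarrow> 'a \<Rightarrow> complex"
  assumes scaleC_of_real: "scaleC (of_real r) x = scaleR r x"
    and scaleC_add_right: "scaleC c (x + y) = scaleC c x + scaleC c y"
    and scaleC_add_left: "scaleC (b + c) x = scaleC b x + scaleC c x"
    and scaleC_scaleC: "scaleC b (scaleC c x) = scaleC (b * c) x"
    and scaleC_one: "scaleC 1 x = x"
    and cinner_add_left: "cinner (x + y) z = cinner x z + cinner y z"
    and cinner_scaleC_left: "cinner (scaleC c x) y = cnj c * cinner x y"
    and cinner_commute: "cinner x y = cnj (cinner y x)"
    and norm_cinner: "norm x = sqrt (Re (cinner x x))"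

definition bounded_clinear :: "('a::chilbert \<Rightarrow> 'a) \<Rightarrow> bool" where
  "bounded_clinear T \<longleftrightarrow> bounded_linear T \<and> (\<forall>c x. T (scaleC c x) = scaleC c (T x))"

definition cadjoint :: "('a::chilbert \<Rightarrow> 'a) \<Rightarrow> ('a \<Rightarrow> 'a)" where
  "cadjoint T = (SOME S. bounded_clinear S \<and> (\<forall>x y. cinner (T x) y = cinner x (S y)))"

definition normal_op :: "('a::chilbert \<Rightarrow> 'a) \<Rightarrow> bool" where
  "normal_op T \<longleftrightarrow> bounded_clinear T \<and> cadjoint T \<circ> T = T \<circ> cadjoint T"

definition normal_tuple :: "nat \<Rightarrow> (nat \<Rightarrow> 'a::chilbert \<Rightarrow> 'a) \<Rightarrow> bool" where
  "normal_tuple d T \<longleftrightarrow> (\<forall>i<d. normal_op (T i)) \<and> (\<forall>i<d. \<forall>j<d. T i \<circ> T j = T j \<circ> T i)"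

text \<open>Joint operator norm (supremum over the closed unit ball; agrees with the
supremum over the unit sphere on nonzero spaces and is 0 on the zero space).\<close>
definition joint_norm :: "nat \<Rightarrow> (nat \<Rightarrow> 'a::chilbert \<Rightarrow> 'a) \<Rightarrow> real" where
  "joint_norm d T = (SUP x\<in>{x. norm x \<le> 1}. sqrt (\<Sum>k<d. (norm (T k x))\<^sup>2))"

end

theory Submission
  imports Defs
begin


lemma cinner_add_right: "cinner x (y + z) = cinner x y + cinner (x::'a::chilbert) z"
  by (metis cinner_add_left cinner_commute complex_cnj_add)

lemma cinner_scaleC_right: "cinner x (scaleC c y) = c * cinner (x::'a::chilbert) y"
  by (metis cinner_commute cinner_scaleC_left complex_cnj_cnj complex_cnj_mult)

lemma cinner_zero_left[simp]: "cinner (0::'a::chilbert) y = 0"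
  using cinner_add_left[of "0::'a" 0 y] by simp

lemma cinner_zero_right[simp]: "cinner (x::'a::chilbert) 0 = 0"
  by (metis cinner_commute cinner_zero_left complex_cnj_zero)

lemma cinner_minus_left: "cinner (- x) y = - cinner (x::'a::chilbert) y"
  using cinner_add_left[of x "-x" y] by (simp add: add.commute eq_neg_iff_add_eq_0)

lemma cinner_minus_right: "cinner x (- y) = - cinner (x::'a::chilbert) y"
  by (metis cinner_commute cinner_minus_left complex_cnj_minus)

lemma cinner_diff_left: "cinner (x - y) z = cinner x z - cinner (y::'a::chilbert) z"
  unfolding diff_conv_add_uminus by (simp only: cinner_add_left cinner_minus_left)

lemma cinner_diff_right: "cinner x (y - z) = cinner x y - cinner (x::'a::chilbert) z"
  unfolding diff_conv_add_uminus by (simp only: cinner_add_right cinner_minus_right)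

lemma cinner_self: "cinner (x::'a::chilbert) x = complex_of_real ((norm x)^2)"
proof -
  have im: "Im (cinner x x) = 0"
    using cinner_commute[of x x] by (simp add: complex_eq_iff)
  have "sqrt (Re (cinner x x)) \<ge> 0" using norm_cinner[of x] by (metis norm_ge_zero)
  then have re: "Re (cinner x x) \<ge> 0" by simp
  have "(norm x)^2 = Re (cinner x x)" using norm_cinner[of x] re by simp
  then show ?thesis using im by (simp add: complex_eq_iff)
qed

lemma Re_cinner_self: "Re (cinner (x::'a::chilbert) x) = (norm x)^2"
  by (simp add: cinner_self)

lemma cinner_ext: "(\<And>x. cinner x a = cinner x b) \<Longrightarrow> a = (b::'a::chilbert)"
proof -
  assume h: "\<And>x. cinner x a = cinner x b"
  have "cinner (a - b) (a - b) = 0" by (simp add: cinner_diff_right h)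
  then have "norm (a - b) = 0" by (simp add: cinner_self)
  then show ?thesis by simp
qed

lemma scaleC_real: "scaleC (complex_of_real r) x = scaleR r (x::'a::chilbert)"
  by (rule scaleC_of_real)

lemma norm_scaleC: "norm (scaleC c x) = norm c * norm (x::'a::chilbert)"
proof -
  have "(norm (scaleC c x))^2 = Re (cinner (scaleC c x) (scaleC c x))" by (simp add: Re_cinner_self)
  also have "\<dots> = Re ((c * cnj c) * complex_of_real ((norm x)^2))"
    by (simp only: cinner_scaleC_left cinner_scaleC_right cinner_self[of x] mult_ac)
  also have "\<dots> = Re (complex_of_real ((norm c)^2) * complex_of_real ((norm x)^2))"
    by (simp only: complex_norm_square)
  also have "\<dots> = (norm c)^2 * (norm x)^2" by simp
  finally have "(norm (scaleC c x))^2 = (norm c * norm x)^2" by (simp add: power_mult_distrib)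
  then show ?thesis by (simp add: power2_eq_iff_nonneg)
qed

lemma norm_add_sq: "(norm (a + b))^2 = (norm a)^2 + (norm b)^2 + 2 * Re (cinner a (b::'a::chilbert))"
proof -
  have "(norm (a+b))^2 = Re (cinner (a+b) (a+b))" by (simp add: Re_cinner_self)
  also have "\<dots> = Re (cinner a a) + Re (cinner b b) + Re (cinner a b) + Re (cinner b a)"
    by (simp add: cinner_add_left cinner_add_right)
  also have "Re (cinner b a) = Re (cinner a b)" using cinner_commute[of b a] by simp
  finally show ?thesis by (simp add: Re_cinner_self)
qed

lemma norm_diff_sq: "(norm (a - b))^2 = (norm a)^2 + (norm b)^2 - 2 * Re (cinner a (b::'a::chilbert))"
proof -
  have "(norm (a - b))^2 = (norm (a + -b))^2" by (metis diff_conv_add_uminus)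
  also have "\<dots> = (norm a)^2 + (norm (-b))^2 + 2*Re(cinner a (-b))" by (rule norm_add_sq)
  also have "cinner a (-b) = - cinner a b" by (rule cinner_minus_right)
  also have "norm (-b) = norm b" by (rule norm_minus_cancel)
  finally show ?thesis by simp
qed

lemma cauchy_schwarz: "norm (cinner x y) \<le> norm x * norm (y::'a::chilbert)"
proof (cases "y = 0")
  case True then show ?thesis by simp
next
  case False
  define n where "n = (norm y)^2"
  have n: "n > 0" using False by (simp add: n_def)
  define t where "t = cinner y x / complex_of_real n"
  define w where "w = x - scaleC t y"
  have yy: "cinner y y = complex_of_real n" by (simp add: cinner_self n_def)
  have wy: "cinner w y = 0"
    unfolding w_def using n
    by (simp add: cinner_diff_left cinner_scaleC_left yy t_def)
       (metis cinner_commute)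
  have "cinner w w = cinner w x - t * cinner w y"
    by (subst (2) w_def) (simp add: cinner_diff_right cinner_scaleC_right)
  also have "\<dots> = cinner w x" by (simp add: wy)
  also have "\<dots> = cinner x x - cnj t * cinner y x" by (simp add: w_def cinner_diff_left cinner_scaleC_left)
  finally have "Re (cinner w w) = (norm x)^2 - Re (cnj t * cinner y x)"
    by (simp add: Re_cinner_self)
  moreover have "cnj t * cinner y x = complex_of_real ((norm (cinner y x))^2 / n)"
  proof -
    have "cnj t * cinner y x = (cinner y x * cnj (cinner y x)) / complex_of_real n"
      by (simp add: t_def)
    also have "\<dots> = complex_of_real ((norm (cinner y x))^2) / complex_of_real n"
      by (simp only: complex_norm_square)
    finally show ?thesis by simp
  qed
  ultimately have "(norm (cinner y x))^2 / n \<le> (norm x)^2"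
  proof -
    assume a1: "Re (cinner w w) = (norm x)^2 - Re (cnj t * cinner y x)"
      and a2: "cnj t * cinner y x = complex_of_real ((norm (cinner y x))^2 / n)"
    have "Re (cinner w w) \<ge> 0" by (simp add: Re_cinner_self)
    then show ?thesis using a1 a2 by simp
  qed
  then have "(norm (cinner y x))^2 \<le> (norm x)^2 * n" using n by (simp add: pos_divide_le_eq)
  then have "(norm (cinner y x))^2 \<le> (norm x)^2 * (norm y)^2" unfolding n_def .
  then have "(norm (cinner y x))^2 \<le> (norm x * norm y)^2" by (simp add: power_mult_distrib)
  then have "norm (cinner y x) \<le> norm x * norm y" by (rule power2_le_imp_le) simp
  moreover have "norm (cinner x y) = norm (cinner y x)" by (metis cinner_commute complex_mod_cnj)
  ultimately show ?thesis by linarith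
qed



lemma riesz:
  fixes f :: "'a::chilbert \<Rightarrow> complex"
  assumes add: "\<And>x y. f (x + y) = f x + f y"
    and sc: "\<And>c x. f (scaleC c x) = c * f x"
    and bd: "\<And>x. norm (f x) \<le> norm x * K"
  shows "\<exists>v. \<forall>x. f x = cinner v x"
proof (cases "\<forall>x. f x = 0")
  case True then show ?thesis by (intro exI[of _ 0]) simp
next
  case False
  then obtain x0 where x0: "f x0 \<noteq> 0" by blast
  have scR: "f (scaleR r x) = complex_of_real r * f x" for r x
    using sc[of "complex_of_real r" x] by (simp add: scaleC_of_real)
  have bl: "bounded_linear f"
    by (rule bounded_linear_intro[where K=K]) (auto simp: add scR scaleR_conv_of_real bd)
  have f0: "f 0 = 0" using linear_simps(3)[OF bl] .
  have fdiff: "f (a - b) = f a - f b" for a b using linear_simps(2)[OF bl] .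
  define M where "M = {y. f y = 1}"
  define N where "N = (\<lambda>y. (norm y)^2) ` M"
  define D where "D = Inf N"
  have Mne: "scaleC (1 / f x0) x0 \<in> M" by (simp add: M_def sc x0)
  have Nne: "N \<noteq> {}" using Mne by (auto simp: N_def)
  have bdd: "bdd_below N" by (rule bdd_belowI[where m=0]) (auto simp: N_def)
  have Dle: "D \<le> (norm y)^2" if "y \<in> M" for y
    unfolding D_def by (rule cInf_lower) (use that bdd in \<open>auto simp: N_def\<close>)
  have ex: "\<exists>y. y \<in> M \<and> (norm y)^2 < D + inverse (real (Suc n))" for n
  proof -
    have "Inf N < D + inverse (real (Suc n))" by (simp add: D_def)
    from cInf_lessD[OF Nne this] show ?thesis by (auto simp: N_def)
  qed
  then obtain y where y: "\<And>n. y n \<in> M" "\<And>n. (norm (y n))^2 < D + inverse (real (Suc n))"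
    by metis
  have par: "(norm (a - b))^2 \<le> 2 * ((norm a)^2 - D) + 2 * ((norm b)^2 - D)"
    if "a \<in> M" "b \<in> M" for a b
  proof -
    have "scaleR (1/2) (a + b) \<in> M"
      using that by (simp add: M_def scR add)
    then have "D \<le> (norm (scaleR (1/2) (a + b)))^2" by (rule Dle)
    also have "\<dots> = (norm (a + b))^2 / 4" by (simp add: power2_eq_square)
    finally have "4 * D \<le> (norm (a + b))^2" by simp
    moreover have "(norm (a + b))^2 + (norm (a - b))^2 = 2 * (norm a)^2 + 2 * (norm b)^2"
      by (simp add: norm_add_sq norm_diff_sq)
    ultimately show ?thesis unfolding right_diff_distrib by linarith
  qed
  have "Cauchy y"
  proof (rule CauchyI)
    fix e :: real assume e: "0 < e"
    then have "0 < e^2 / 4" by simp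
    from reals_Archimedean[OF this] obtain N0 where N0: "inverse (real (Suc N0)) < e^2 / 4" by auto
    have "\<forall>m\<ge>N0. \<forall>n\<ge>N0. norm (y m - y n) < e"
    proof (intro allI impI)
      fix m n assume mn: "N0 \<le> m" "N0 \<le> n"
      have im: "inverse (real (Suc m)) \<le> inverse (real (Suc N0))"
        using mn by (simp add: le_imp_inverse_le)
      have inn: "inverse (real (Suc n)) \<le> inverse (real (Suc N0))"
        using mn by (simp add: le_imp_inverse_le)
      have "(norm (y m - y n))^2 \<le> 2 * ((norm (y m))^2 - D) + 2 * ((norm (y n))^2 - D)"
        using par y(1) by blast
      also have "\<dots> < e^2"
        using y(2)[of m] y(2)[of n] im inn N0 unfolding right_diff_distrib by linarith
      finally have "(norm (y m - y n))^2 < e^2" .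
      then show "norm (y m - y n) < e"
        using e by (simp add: power_less_imp_less_base)
    qed
    then show "\<exists>M. \<forall>m\<ge>M. \<forall>n\<ge>M. norm (y m - y n) < e" by blast
  qed
  then have "convergent y" by (rule Cauchy_convergent)
  then obtain u where u: "y \<longlonglongrightarrow> u" by (auto simp: convergent_def)
  have "(\<lambda>n. f (y n)) \<longlonglongrightarrow> f u" using bounded_linear.tendsto[OF bl u] .
  moreover have "(\<lambda>n. f (y n)) = (\<lambda>n. 1)" using y(1) by (auto simp: M_def)
  ultimately have "(\<lambda>n. 1::complex) \<longlonglongrightarrow> f u" by simp
  then have fu: "f u = 1" using LIMSEQ_unique[OF tendsto_const] by metis
  have "(\<lambda>n. (norm (y n))^2) \<longlonglongrightarrow> (norm u)^2" using u by (intro tendsto_intros)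
  then have "(norm u)^2 \<le> D"
    by (rule LIMSEQ_le[OF _ LIMSEQ_inverse_real_of_nat_add]) (use y(2) less_imp_le in blast)
  then have umin: "(norm u)^2 \<le> (norm z)^2" if "z \<in> M" for z using Dle[OF that] by linarith
  have orth: "cinner u w = 0" if fw: "f w = 0" for w
  proof (cases "w = 0")
    case True then show ?thesis by simp
  next
    case False
    define a where "a = cinner u w"
    define nw where "nw = (norm w)^2"
    have nw: "nw > 0" using False by (simp add: nw_def)
    define t where "t = - cnj a / complex_of_real nw"
    have "u + scaleC t w \<in> M" using fu fw by (simp add: M_def add sc)
    then have "(norm u)^2 \<le> (norm (u + scaleC t w))^2" by (rule umin)
    also have "\<dots> = (norm u)^2 + (norm t * norm w)^2 + 2 * Re (t * a)"
      by (simp add: norm_add_sq norm_scaleC cinner_scaleC_right a_def)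
    also have "(norm t * norm w)^2 = (norm a)^2 / nw"
    proof -
      have nt: "norm t = norm a / nw" using nw by (simp add: t_def norm_divide)
      have "(norm t * norm w)^2 = (norm a)^2 / nw^2 * nw"
        by (simp add: nt power_mult_distrib power_divide nw_def)
      then show ?thesis using nw by (simp add: power2_eq_square)
    qed
    also have "t * a = - complex_of_real ((norm a)^2) / complex_of_real nw"
      by (simp add: t_def mult.commute) (metis complex_norm_square of_real_power)
    also have "Re (- complex_of_real ((norm a)^2) / complex_of_real nw) = - ((norm a)^2 / nw)"
      by (simp add: Re_divide_of_real)
    finally have "(norm a)^2 / nw \<le> 0" by simp
    then have "(norm a)^2 \<le> 0" using nw by (simp add: divide_le_0_iff)
    then show ?thesis by (simp add: a_def)
  qed
  have u0: "u \<noteq> 0" using fu f0 by auto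
  define nu where "nu = (norm u)^2"
  have nu: "nu > 0" using u0 by (simp add: nu_def)
  show ?thesis
  proof (intro exI allI)
    fix x
    have "f (x - scaleC (f x) u) = 0" by (simp add: fdiff sc fu)
    then have "cinner u (x - scaleC (f x) u) = 0" by (rule orth)
    then have "cinner u x = f x * complex_of_real nu"
      by (simp add: cinner_diff_right cinner_scaleC_right cinner_self nu_def)
    then show "f x = cinner (scaleC (complex_of_real (1 / nu)) u) x"
      using nu by (simp add: cinner_scaleC_left)
  qed
qed

lemma adjoint_exists:
  assumes "bounded_clinear (T :: 'a::chilbert \<Rightarrow> 'a)"
  shows "\<exists>S. bounded_clinear S \<and> (\<forall>x y. cinner (T x) y = cinner x (S y))"
proof -
  have bl: "bounded_linear T" and cl: "\<And>c x. T (scaleC c x) = scaleC c (T x)"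
    using assms by (auto simp: bounded_clinear_def)
  obtain K where K: "\<And>x. norm (T x) \<le> norm x * K" "K > 0"
    using bounded_linear.pos_bounded[OF bl] by blast
  have "\<exists>v. \<forall>x. cinner y (T x) = cinner v x" for y
  proof (rule riesz[where K="norm y * K"])
    show "cinner y (T (a + b)) = cinner y (T a) + cinner y (T b)" for a b
      by (simp add: linear_simps(1)[OF bl] cinner_add_right)
    show "cinner y (T (scaleC c a)) = c * cinner y (T a)" for c a
      by (simp add: cl cinner_scaleC_right)
    show "norm (cinner y (T a)) \<le> norm a * (norm y * K)" for a
    proof -
      have "norm (cinner y (T a)) \<le> norm y * norm (T a)" by (rule cauchy_schwarz)
      also have "\<dots> \<le> norm y * (norm a * K)" by (rule mult_left_mono[OF K(1)]) simp
      finally show ?thesis by (simp add: mult_ac)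
    qed
  qed
  then obtain S where S: "\<And>y x. cinner y (T x) = cinner (S y) x" by metis
  have adj: "cinner (T x) y = cinner x (S y)" for x y
    by (metis S cinner_commute)
  have Sadd: "S (a + b) = S a + S b" for a b
    by (rule cinner_ext) (simp add: adj[symmetric] cinner_add_right)
  have SscC: "S (scaleC c a) = scaleC c (S a)" for c a
    by (rule cinner_ext) (simp add: adj[symmetric] cinner_scaleC_right)
  have Sbd: "norm (S y) \<le> norm y * K" for y
  proof -
    have "(norm (S y))^2 = Re (cinner (T (S y)) y)" by (simp add: adj Re_cinner_self)
    also have "\<dots> \<le> norm (cinner (T (S y)) y)" by (rule complex_Re_le_cmod)
    also have "\<dots> \<le> norm (T (S y)) * norm y" by (rule cauchy_schwarz)
    also have "\<dots> \<le> (norm (S y) * K) * norm y" by (rule mult_right_mono[OF K(1)]) simp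
    finally have h: "norm (S y) * norm (S y) \<le> norm (S y) * (norm y * K)"
      by (simp add: power2_eq_square mult_ac)
    show ?thesis
    proof (cases "norm (S y) = 0")
      case True then show ?thesis using K by simp
    next
      case False then have "norm (S y) > 0" by simp
      then show ?thesis using h by (simp add: mult_le_cancel_left_pos)
    qed
  qed
  have "bounded_linear S"
    by (rule bounded_linear_intro[where K=K])
       (auto simp: Sadd Sbd SscC scaleC_of_real[symmetric])
  then have "bounded_clinear S" using SscC by (simp add: bounded_clinear_def)
  then show ?thesis using adj by blast
qed

lemma cadjoint:
  assumes "bounded_clinear (T :: 'a::chilbert \<Rightarrow> 'a)"
  shows "bounded_clinear (cadjoint T)" "\<And>x y. cinner (T x) y = cinner x (cadjoint T y)"
proof -
  have "bounded_clinear (cadjoint T) \<and> (\<forall>x y. cinner (T x) y = cinner x (cadjoint T y))"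
    unfolding cadjoint_def by (rule someI_ex[OF adjoint_exists[OF assms]])
  then show "bounded_clinear (cadjoint T)" "\<And>x y. cinner (T x) y = cinner x (cadjoint T y)" by auto
qed



lemma normal_norm:
  assumes "normal_op (T :: 'a::chilbert \<Rightarrow> 'a)"
  shows "norm (T x) = norm (cadjoint T x)"
proof -
  have bc: "bounded_clinear T" and comm: "cadjoint T \<circ> T = T \<circ> cadjoint T"
    using assms by (auto simp: normal_op_def)
  note adj = cadjoint(2)[OF bc]
  have c: "cadjoint T (T x) = T (cadjoint T x)" using fun_cong[OF comm, of x] by simp
  have "(norm (T x))^2 = Re (cinner (T x) (T x))" by (simp add: Re_cinner_self)
  also have "\<dots> = Re (cinner x (T (cadjoint T x)))" by (simp add: adj c)
  also have "\<dots> = Re (cinner (T (cadjoint T x)) x)" using cinner_commute[of x] by simp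
  also have "\<dots> = Re (cinner (cadjoint T x) (cadjoint T x))" by (simp add: adj)
  also have "\<dots> = (norm (cadjoint T x))^2" by (simp add: Re_cinner_self)
  finally show ?thesis by (simp add: power2_eq_iff_nonneg)
qed

lemma jn_le:
  assumes "\<And>x. norm (x::'a::chilbert) \<le> 1 \<Longrightarrow> sqrt (\<Sum>k<d. (norm (F k x))^2) \<le> B"
  shows "joint_norm d F \<le> B"
  unfolding joint_norm_def
proof (rule cSUP_least)
  show "{x::'a. norm x \<le> 1} \<noteq> {}" by (auto intro: exI[of _ 0])
qed (use assms in auto)

lemma jn_bdd:
  assumes "\<And>k. k < d \<Longrightarrow> bounded_linear (F k :: 'a::chilbert \<Rightarrow> 'a)"
  shows "bdd_above ((\<lambda>x. sqrt (\<Sum>k<d. (norm (F k x))^2)) ` {x. norm x \<le> 1})"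
proof -
  have "\<forall>k. \<exists>K. k < d \<longrightarrow> (\<forall>x. norm (F k x) \<le> norm x * K) \<and> K > 0"
    using assms bounded_linear.pos_bounded by blast
  then obtain K where K: "\<And>k x. k < d \<Longrightarrow> norm (F k x) \<le> norm x * K k" "\<And>k. k < d \<Longrightarrow> K k > 0"
    by metis
  show ?thesis
  proof (rule bdd_aboveI2)
    fix x :: 'a assume "x \<in> {x. norm x \<le> 1}"
    then have x: "norm x \<le> 1" by simp
    have "(\<Sum>k<d. (norm (F k x))^2) \<le> (\<Sum>k<d. (K k)^2)"
    proof (rule sum_mono)
      fix k assume "k \<in> {..<d}"
      then have k: "k < d" by simp
      have "norm (F k x) \<le> norm x * K k" by (rule K(1)[OF k])
      also have "\<dots> \<le> 1 * K k" by (rule mult_right_mono[OF x]) (use K(2)[OF k] in simp)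
      finally show "(norm (F k x))^2 \<le> (K k)^2" by (intro power_mono) auto
    qed
    then show "sqrt (\<Sum>k<d. (norm (F k x))^2) \<le> sqrt (\<Sum>k<d. (K k)^2)" by simp
  qed
qed

lemma jn_ge:
  assumes "\<And>k. k < d \<Longrightarrow> bounded_linear (F k :: 'a::chilbert \<Rightarrow> 'a)" "norm x \<le> 1"
  shows "sqrt (\<Sum>k<d. (norm (F k x))^2) \<le> joint_norm d F"
  unfolding joint_norm_def
  by (rule cSUP_upper) (use assms(2) jn_bdd[OF assms(1)] in auto)

lemma jn_nonneg:
  assumes "\<And>k. k < d \<Longrightarrow> bounded_linear (F k :: 'a::chilbert \<Rightarrow> 'a)"
  shows "0 \<le> joint_norm d F"
proof -
  have "0 \<le> sqrt (\<Sum>k<d. (norm (F k (0::'a)))^2)" by (simp add: sum_nonneg)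
  also have "\<dots> \<le> joint_norm d F" using jn_ge[where F=F and d=d and x=0] assms by simp
  finally show ?thesis .
qed

lemma jn_scale:
  assumes bl: "\<And>k. k < d \<Longrightarrow> bounded_linear (F k :: 'a::chilbert \<Rightarrow> 'a)"
  shows "(\<Sum>k<d. (norm (F k y))^2) \<le> (joint_norm d F)^2 * (norm y)^2"
proof (cases "y = 0")
  case True
  have "(\<Sum>k<d. (norm (F k y))^2) = 0"
    by (rule sum.neutral) (use bl True linear_simps(3) in auto)
  then show ?thesis by simp
next
  case False
  define ny where "ny = norm y"
  have ny: "ny > 0" using False by (simp add: ny_def)
  define x where "x = scaleR (1/ny) y"
  have nx: "norm x \<le> 1" using ny by (simp add: x_def ny_def)
  have Fx: "(norm (F k x))^2 = (norm (F k y))^2 / ny^2" if "k < d" for k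
    using ny linear_simps(5)[OF bl[OF that]]
    by (simp add: x_def power_divide)
  have "(\<Sum>k<d. (norm (F k x))^2) = (\<Sum>k<d. (norm (F k y))^2) / ny^2"
    by (simp add: Fx sum_divide_distrib)
  moreover have "sqrt (\<Sum>k<d. (norm (F k x))^2) \<le> joint_norm d F" using jn_ge[where F=F and d=d and x=x] bl nx by blast
  ultimately have "sqrt ((\<Sum>k<d. (norm (F k y))^2) / ny^2) \<le> joint_norm d F" by simp
  then have "(sqrt ((\<Sum>k<d. (norm (F k y))^2) / ny^2))^2 \<le> (joint_norm d F)^2"
    by (intro power_mono) (auto simp: sum_nonneg)
  then have "(\<Sum>k<d. (norm (F k y))^2) / ny^2 \<le> (joint_norm d F)^2"
    by (simp add: sum_nonneg)
  then show ?thesis using ny by (simp add: pos_divide_le_eq ny_def)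
qed



theorem theorem2p5:
  fixes T :: "nat \<Rightarrow> 'a::chilbert \<Rightarrow> 'a" and d :: nat
  assumes "normal_tuple d T"
  shows "joint_norm d (\<lambda>k. T k \<circ> T k) = joint_norm d (\<lambda>k. cadjoint (T k) \<circ> T k)
    \<and> joint_norm d (\<lambda>k. cadjoint (T k) \<circ> T k) \<le> (joint_norm d T)\<^sup>2
    \<and> (joint_norm d T)\<^sup>2 = (joint_norm d (\<lambda>k. cadjoint (T k)))\<^sup>2
    \<and> (joint_norm d (\<lambda>k. cadjoint (T k)))\<^sup>2 \<le> sqrt (real d) * joint_norm d (\<lambda>k. T k \<circ> T k)"
proof -
  have nT: "\<And>k. k < d \<Longrightarrow> normal_op (T k)" using assms by (simp add: normal_tuple_def)
  have cT: "\<And>k. k < d \<Longrightarrow> bounded_clinear (T k)" using nT by (simp add: normal_op_def)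
  have bT: "\<And>k. k < d \<Longrightarrow> bounded_linear (T k)" using cT by (simp add: bounded_clinear_def)
  have bS: "\<And>k. k < d \<Longrightarrow> bounded_linear (cadjoint (T k))"
    using cT cadjoint(1) unfolding bounded_clinear_def by blast
  have adj: "\<And>k x y. k < d \<Longrightarrow> cinner (T k x) y = cinner x (cadjoint (T k) y)"
    using cT cadjoint(2) by blast
  have bQ: "\<And>k. k < d \<Longrightarrow> bounded_linear (T k \<circ> T k)"
    using bT bounded_linear_compose by (auto simp: o_def)
  have bA: "\<And>k. k < d \<Longrightarrow> bounded_linear (cadjoint (T k) \<circ> T k)"
    using bT bS bounded_linear_compose by (auto simp: o_def)
  define J where "J = joint_norm d T"
  define JA where "JA = joint_norm d (\<lambda>k. cadjoint (T k) \<circ> T k)"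
  define JQ where "JQ = joint_norm d (\<lambda>k. T k \<circ> T k)"
  define JS where "JS = joint_norm d (\<lambda>k. cadjoint (T k))"
  have J0: "0 \<le> J" unfolding J_def by (rule jn_nonneg) (rule bT)
  have JA0: "0 \<le> JA" unfolding JA_def by (rule jn_nonneg) (rule bA)
  have eqA: "JQ = JA"
  proof -
    have "(\<Sum>k<d. (norm ((T k \<circ> T k) x))^2) = (\<Sum>k<d. (norm ((cadjoint (T k) \<circ> T k) x))^2)" for x
      by (rule sum.cong) (auto simp: normal_norm nT)
    then show ?thesis unfolding JQ_def JA_def joint_norm_def by simp
  qed
  have eqS: "J = JS"
  proof -
    have "(\<Sum>k<d. (norm (T k x))^2) = (\<Sum>k<d. (norm (cadjoint (T k) x))^2)" for x
      by (rule sum.cong) (auto simp: normal_norm nT)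
    then show ?thesis unfolding J_def JS_def joint_norm_def by simp
  qed
  have scT: "(\<Sum>k<d. (norm (T k y))^2) \<le> J^2 * (norm y)^2" for y
    unfolding J_def by (rule jn_scale) (rule bT)
  have step2: "JQ \<le> J^2"
    unfolding JQ_def
  proof (rule jn_le)
    fix x :: 'a assume x: "norm x \<le> 1"
    have "(\<Sum>k<d. (norm ((T k \<circ> T k) x))^2) \<le> (\<Sum>k<d. \<Sum>j<d. (norm (T j (T k x)))^2)"
    proof (rule sum_mono)
      fix k assume "k \<in> {..<d}"
      then show "(norm ((T k \<circ> T k) x))^2 \<le> (\<Sum>j<d. (norm (T j (T k x)))^2)"
        using member_le_sum[of k "{..<d}" "\<lambda>j. (norm (T j (T k x)))^2"] by simp
    qed
    also have "\<dots> \<le> (\<Sum>k<d. J^2 * (norm (T k x))^2)"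
      by (rule sum_mono) (rule scT)
    also have "\<dots> = J^2 * (\<Sum>k<d. (norm (T k x))^2)" by (simp add: sum_distrib_left)
    also have "\<dots> \<le> J^2 * (J^2 * (norm x)^2)" by (rule mult_left_mono[OF scT]) simp
    also have "\<dots> \<le> J^2 * (J^2 * 1)"
      using x by (intro mult_left_mono) (auto simp: power_le_one)
    finally have "(\<Sum>k<d. (norm ((T k \<circ> T k) x))^2) \<le> (J^2)^2" by (simp add: power2_eq_square)
    then have "sqrt (\<Sum>k<d. (norm ((T k \<circ> T k) x))^2) \<le> sqrt ((J^2)^2)"
      by (rule real_sqrt_le_mono)
    also have "sqrt ((J^2)^2) = J^2" by (simp only: real_sqrt_abs abs_power2)
    finally show "sqrt (\<Sum>k<d. (norm ((T k \<circ> T k) x))^2) \<le> J^2" .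
  qed
  have step4: "J \<le> sqrt (sqrt (real d) * JA)"
    unfolding J_def
  proof (rule jn_le)
    fix x :: 'a assume x: "norm x \<le> 1"
    have t: "(norm (T k x))^2 \<le> norm ((cadjoint (T k) \<circ> T k) x)" if k: "k < d" for k
    proof -
      have "(norm (T k x))^2 = Re (cinner x ((cadjoint (T k) \<circ> T k) x))"
        by (simp add: Re_cinner_self[symmetric] adj[OF k])
      also have "\<dots> \<le> norm (cinner x ((cadjoint (T k) \<circ> T k) x))" by (rule complex_Re_le_cmod)
      also have "\<dots> \<le> norm x * norm ((cadjoint (T k) \<circ> T k) x)" by (rule cauchy_schwarz)
      also have "\<dots> \<le> 1 * norm ((cadjoint (T k) \<circ> T k) x)" by (rule mult_right_mono[OF x]) simp
      finally show ?thesis by simp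
    qed
    have "(\<Sum>k<d. (norm (T k x))^2) \<le> (\<Sum>k<d. norm ((cadjoint (T k) \<circ> T k) x))"
      by (rule sum_mono) (use t in auto)
    also have "\<dots> = (\<Sum>k<d. \<bar>1\<bar> * \<bar>norm ((cadjoint (T k) \<circ> T k) x)\<bar>)" by simp
    also have "\<dots> \<le> L2_set (\<lambda>_. 1) {..<d} * L2_set (\<lambda>k. norm ((cadjoint (T k) \<circ> T k) x)) {..<d}"
      by (rule L2_set_mult_ineq)
    also have "L2_set (\<lambda>_. 1) {..<d} = sqrt (real d)" by (simp add: L2_set_def)
    also have "L2_set (\<lambda>k. norm ((cadjoint (T k) \<circ> T k) x)) {..<d} \<le> JA"
      unfolding L2_set_def JA_def using jn_ge[where F="\<lambda>k. cadjoint (T k) \<circ> T k" and d=d and x=x] bA x by blast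
    then have "sqrt (real d) * L2_set (\<lambda>k. norm ((cadjoint (T k) \<circ> T k) x)) {..<d} \<le> sqrt (real d) * JA"
      by (rule mult_left_mono) simp
    finally have "(\<Sum>k<d. (norm (T k x))^2) \<le> sqrt (real d) * JA" .
    then show "sqrt (\<Sum>k<d. (norm (T k x))^2) \<le> sqrt (sqrt (real d) * JA)"
      by (rule real_sqrt_le_mono)
  qed
  have step4': "J^2 \<le> sqrt (real d) * JA"
  proof -
    have "J^2 \<le> (sqrt (sqrt (real d) * JA))^2" by (rule power_mono[OF step4 J0])
    also have "\<dots> = sqrt (real d) * JA" using JA0 by simp
    finally show ?thesis .
  qed
  show ?thesis
    using eqA step2 eqS step4'
    unfolding J_def[symmetric] JA_def[symmetric] JQ_def[symmetric] JS_def[symmetric]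
    by simp
qed

end
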